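(* Let $V$ be a real vector space with a $\sigma$-algebra $\mathcal{B}$ for which every finite-dimensional hyperplane $H=x+T:=\{x+u:u\in T\}$ ($x\in V$, $T$ a finite-dimensional vector subspace) is measurable. Let $Q$ be a probability measure on $\mathcal{B}$ and for $j=0,1,2,\dots$ let $\mathcal{H}_j$ be the collection of all $j$-dimensional hyperplanes in $V$. Then for each $j=0,1,2,\dots$, for any infinite sequence $\{C_i\}$ of distinct hyperplanes in $\mathcal{H}_j$ such that $Q(C_i)$ converges, its limit equals $Q(F)$ for some hyperplane $F$ of dimension less than $j$ such that $F\subset C_i$ for infinitely many $i$. In particular, $Q(C_i)$ cannot be strictly increasing. The same statements hold with finite-dimensional vector subspaces in place of hyperplanes.
   Context: Hyperplanes of dimension $0$ are singletons $\{x\}$; the empty set $\emptyset$ is considered a hyperplane of dimension $-1$. *)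

theory Defs
  imports "HOL-Probability.Probability"
begin

definition fd_subspace_dim :: "'a::real_vector set \<Rightarrow> nat \<Rightarrow> bool" where
  "fd_subspace_dim T j \<longleftrightarrow>
     (\<exists>B. finite B \<and> independent B \<and> span B = T \<and> card B = j)"

text \<open>A hyperplane of dimension j (j \<ge> 0): a translate x + T of a j-dimensional
  subspace T. (The empty set is the hyperplane of dimension -1; it is handled
  separately in the statement.)\<close>
definition hyperplane_dim :: "'a::real_vector set \<Rightarrow> nat \<Rightarrow> bool" where
  "hyperplane_dim H j \<longleftrightarrow> (\<exists>x T. fd_subspace_dim T j \<and> H = {x + u | u. u \<in> T})"

end

theory Submission
  imports Defs
begin


locale lev_sys = prob_space Q for Q :: "'a measure" +
  fixes Lev :: "nat \<Rightarrow> 'a set set"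
  assumes lev_mono: "Lev n \<subseteq> Lev (Suc n)"
    and lev_base: "A \<in> Lev 0 \<Longrightarrow> B \<in> Lev 0 \<Longrightarrow> A = B"
    and lev_inter: "F \<noteq> {} \<Longrightarrow> F \<subseteq> Lev n \<Longrightarrow> \<Inter>F \<in> Lev n"
    and lev_sub: "X \<in> Lev (Suc n) \<Longrightarrow> A \<in> Lev (Suc n) \<Longrightarrow> A \<notin> Lev n \<Longrightarrow> X \<subseteq> A \<Longrightarrow> X \<noteq> A \<Longrightarrow> X \<in> Lev n"
    and lev_meas: "Lev n \<subseteq> sets Q"
begin

lemma lev_sets: "A \<in> Lev n \<Longrightarrow> A \<in> sets Q"
  using lev_meas by blast

lemma reduce:
  assumes "inj r" "infinite K'" "L \<le> measure Q (\<Inter>i\<in>K'. D (r i))"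
  shows "\<exists>K. infinite K \<and> L \<le> measure Q (\<Inter>k\<in>K. D k)"
proof (intro exI conjI)
  show "infinite (r ` K')" using assms(1,2) by (simp add: finite_image_iff inj_on_subset)
  show "L \<le> measure Q (\<Inter>k\<in>r ` K'. D k)" using assms(3) by (simp add: image_image)
qed

lemma two:
  assumes "X \<in> Lev (Suc n)" "X \<subseteq> A" "X \<subseteq> B" "A \<noteq> B"
    "A \<in> Lev (Suc n)" "A \<notin> Lev n" "B \<in> Lev (Suc n)" "B \<notin> Lev n"
  shows "X \<in> Lev n"
proof -
  have "X \<noteq> A"
  proof
    assume "X = A"
    then have "A \<subseteq> B" using assms by simp
    then have "A \<in> Lev n" using lev_sub[of A n B] assms by blast
    then show False using assms by simp
  qed
  then show ?thesis using lev_sub[of X n A] assms by blast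
qed

lemma limit_along:
  fixes a :: "nat \<Rightarrow> real"
  assumes "a \<longlonglongrightarrow> L" "infinite K" "\<And>k. k \<in> K \<Longrightarrow> c \<le> a k"
  shows "c \<le> L"
proof -
  have "(a \<circ> enumerate K) \<longlonglongrightarrow> L"
    using LIMSEQ_subseq_LIMSEQ[OF assms(1) strict_mono_enumerate[OF assms(2)]] .
  moreover have "\<And>i. c \<le> (a \<circ> enumerate K) i"
    using assms(3) enumerate_in_set[OF assms(2)] by simp
  ultimately show ?thesis by (meson LIMSEQ_le_const)
qed

lemma limit_along2:
  fixes a :: "nat \<Rightarrow> real"
  assumes "a \<longlonglongrightarrow> L" "infinite K" "\<And>k. k \<in> K \<Longrightarrow> a k \<le> c"
  shows "L \<le> c"
proof -
  have "(a \<circ> enumerate K) \<longlonglongrightarrow> L"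
    using LIMSEQ_subseq_LIMSEQ[OF assms(1) strict_mono_enumerate[OF assms(2)]] .
  moreover have "\<And>i. (a \<circ> enumerate K) i \<le> c"
    using assms(3) enumerate_in_set[OF assms(2)] by simp
  ultimately show ?thesis by (meson LIMSEQ_le_const2)
qed

end

locale core = lev_sys Q Lev for Q :: "'a measure" and Lev +
  fixes n :: nat and D :: "nat \<Rightarrow> 'a set" and L :: real
  assumes IH: "\<And>E l. (\<And>k. E k \<in> Lev n) \<Longrightarrow> (\<lambda>k. measure Q (E k)) \<longlonglongrightarrow> l \<Longrightarrow>
      \<exists>K. infinite K \<and> l \<le> measure Q (\<Inter>k\<in>K. E k)"
    and D_lev: "D k \<in> Lev (Suc n)" and D_ex: "D k \<notin> Lev n"
    and D_fin: "finite {k. D k = A}"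
    and D_lim: "(\<lambda>k. measure Q (D k)) \<longlonglongrightarrow> L"
begin

lemma inter_inf:
  assumes "infinite K" shows "(\<Inter>k\<in>K. D k) \<in> Lev n"
proof -
  obtain a where a: "a \<in> K" using assms by (metis finite.emptyI ex_in_conv)
  have "infinite (K - {k. D k = D a})" using assms D_fin by (simp add: Diff_infinite_finite)
  then obtain b where b: "b \<in> K" "D b \<noteq> D a" by (metis (mono_tags, lifting) DiffE finite.emptyI mem_Collect_eq ex_in_conv)
  have X: "(\<Inter>k\<in>K. D k) \<in> Lev (Suc n)"
    by (rule lev_inter) (use a D_lev in auto)
  show ?thesis
    by (rule two[OF X, of "D a" "D b"]) (use a b D_lev D_ex in auto)
qed

lemma pair:
  assumes "D k \<noteq> D m" shows "D k \<inter> D m \<in> Lev n"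
proof -
  have X: "D k \<inter> D m \<in> Lev (Suc n)"
    using lev_inter[of "{D k, D m}" "Suc n"] D_lev by auto
  show ?thesis
    by (rule two[OF X, of "D k" "D m"]) (use assms D_lev D_ex in auto)
qed

definition s where "s = Sup {measure Q (\<Inter>k\<in>K. D k) | K. infinite K}"

lemma S_bdd: "bdd_above {measure Q (\<Inter>k\<in>K. D k) | K. infinite K}"
  by (rule bdd_aboveI[of _ 1]) auto

lemma S_ne: "{measure Q (\<Inter>k\<in>K. D k) | K. infinite K} \<noteq> {}"
  by auto

lemma le_s: "infinite K \<Longrightarrow> measure Q (\<Inter>k\<in>K. D k) \<le> s"
  unfolding s_def by (rule cSup_upper[OF _ S_bdd]) auto

lemma attain: "\<exists>K. infinite K \<and> s \<le> measure Q (\<Inter>k\<in>K. D k)"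
proof -
  have "\<forall>m. \<exists>K. infinite K \<and> s - inverse (real (Suc m)) < measure Q (\<Inter>k\<in>K. D k)"
  proof
    fix m
    have "s - inverse (real (Suc m)) < s" by simp
    then obtain x where "x \<in> {measure Q (\<Inter>k\<in>K. D k) | K. infinite K}" "s - inverse (real (Suc m)) < x"
      using less_cSupD[OF S_ne] unfolding s_def by blast
    then show "\<exists>K. infinite K \<and> s - inverse (real (Suc m)) < measure Q (\<Inter>k\<in>K. D k)" by auto
  qed
  then obtain Kf where Kf: "\<And>m. infinite (Kf m)" "\<And>m. s - inverse (real (Suc m)) < measure Q (\<Inter>k\<in>Kf m. D k)"
    by metis
  define E where "E m = (\<Inter>k\<in>Kf m. D k)" for m
  have E_lev: "E m \<in> Lev n" for m unfolding E_def using inter_inf Kf by auto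
  have "(\<lambda>m. measure Q (E m)) \<longlonglongrightarrow> s"
  proof (rule tendsto_sandwich[of "\<lambda>m. s - inverse (real (Suc m))" _ _ "\<lambda>m. s"])
    show "\<forall>\<^sub>F m in sequentially. s - inverse (real (Suc m)) \<le> measure Q (E m)"
      using Kf(2) unfolding E_def by (intro always_eventually allI less_imp_le) auto
    show "\<forall>\<^sub>F m in sequentially. measure Q (E m) \<le> s"
      using le_s Kf(1) unfolding E_def by auto
    show "(\<lambda>m. s - inverse (real (Suc m))) \<longlonglongrightarrow> s"
      using tendsto_diff[OF tendsto_const LIMSEQ_inverse_real_of_nat, of s] by simp
  qed simp
  from IH[OF E_lev this] obtain M where M: "infinite M" "s \<le> measure Q (\<Inter>m\<in>M. E m)" by blast
  have eq: "(\<Inter>m\<in>M. E m) = (\<Inter>k\<in>(\<Union>m\<in>M. Kf m). D k)" unfolding E_def by auto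
  obtain m0 where "m0 \<in> M" using M(1) by (metis finite.emptyI ex_in_conv)
  then have "infinite (\<Union>m\<in>M. Kf m)" using Kf(1) by (meson UN_upper infinite_super)
  then show ?thesis using M(2) eq by metis
qed

lemma one_m:
  assumes K0: "infinite (K0::nat set)" and E: "\<And>k. k \<in> K0 \<Longrightarrow> E k \<in> Lev n"
  shows "\<exists>K G. K \<subseteq> K0 \<and> infinite K \<and> G \<in> Lev n \<and> (\<forall>k\<in>K. G \<subseteq> E k) \<and>
           (\<forall>\<epsilon>>0. finite {k\<in>K. measure Q G + \<epsilon> \<le> measure Q (E k)})"
proof -
  define r where "r = enumerate K0"
  have r_sm: "strict_mono r" and r_in: "\<And>i. r i \<in> K0"
    unfolding r_def using strict_mono_enumerate[OF K0] enumerate_in_set[OF K0] by auto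
  define a where "a i = measure Q (E (r i))" for i
  have "bounded (range a)"
    unfolding bounded_iff by (rule exI[of _ 1]) (auto simp: a_def)
  then obtain l \<phi> where phi: "strict_mono (\<phi>::nat\<Rightarrow>nat)" "(a \<circ> \<phi>) \<longlonglongrightarrow> l"
    using bounded_imp_convergent_subsequence by blast
  define \<psi> where "\<psi> = r \<circ> \<phi>"
  have psi_sm: "strict_mono \<psi>" using r_sm phi(1) unfolding \<psi>_def strict_mono_def by auto
  then have psi_inj: "inj \<psi>" by (rule strict_mono_imp_inj_on)
  have psi_in: "\<psi> i \<in> K0" for i unfolding \<psi>_def using r_in by simp
  have lim: "(\<lambda>i. measure Q (E (\<psi> i))) \<longlonglongrightarrow> l" using phi(2) unfolding \<psi>_def a_def o_def .
  from IH[of "\<lambda>i. E (\<psi> i)", OF _ lim] E psi_in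
  obtain I where I: "infinite I" "l \<le> measure Q (\<Inter>i\<in>I. E (\<psi> i))" by blast
  define K where "K = \<psi> ` I"
  define G where "G = (\<Inter>k\<in>K. E k)"
  have Geq: "G = (\<Inter>i\<in>I. E (\<psi> i))" unfolding G_def K_def by (simp add: image_image)
  have Kinf: "infinite K" unfolding K_def using I(1) psi_inj by (simp add: finite_image_iff inj_on_subset)
  have KK0: "K \<subseteq> K0" unfolding K_def using psi_in by auto
  have GL: "G \<in> Lev n"
    unfolding G_def by (rule lev_inter) (use Kinf KK0 E in auto)
  have fin: "finite {k\<in>K. measure Q G + \<epsilon> \<le> measure Q (E k)}" if "\<epsilon> > 0" for \<epsilon>
  proof -
    have "l < l + \<epsilon>" using that by simp
    from order_tendstoD(2)[OF phi(2) this] obtain N where N: "\<And>i. i \<ge> N \<Longrightarrow> a (\<phi> i) < l + \<epsilon>"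
      unfolding eventually_sequentially o_def by blast
    have "{k\<in>K. measure Q G + \<epsilon> \<le> measure Q (E k)} \<subseteq> \<psi> ` {..<N}"
    proof
      fix k assume k: "k \<in> {k\<in>K. measure Q G + \<epsilon> \<le> measure Q (E k)}"
      then obtain i where i: "i \<in> I" "k = \<psi> i" unfolding K_def by auto
      have "l + \<epsilon> \<le> a (\<phi> i)" using k i I(2) Geq unfolding a_def \<psi>_def by auto
      then have "i < N" using N by (meson linorder_not_le not_less)
      then show "k \<in> \<psi> ` {..<N}" using i by auto
    qed
    then show ?thesis by (rule finite_subset) simp
  qed
  show ?thesis
    using KK0 Kinf GL fin unfolding G_def by blast
qed

lemma extr_lem:
  assumes "finite M"
  shows "infinite K0 \<Longrightarrow> (\<forall>k\<in>K0. \<forall>m\<in>M. D k \<noteq> D m) \<Longrightarrow>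
    \<exists>K G. K \<subseteq> K0 \<and> infinite K \<and> (\<forall>m\<in>M. G m \<in> Lev n \<and> (\<forall>k\<in>K. G m \<subseteq> D k \<inter> D m) \<and>
       (\<forall>\<epsilon>>0. finite {k\<in>K. measure Q (G m) + \<epsilon> \<le> measure Q (D k \<inter> D m)}))"
  using assms
proof (induction M arbitrary: K0 rule: finite_induct)
  case empty
  show ?case by (rule exI[of _ K0], rule exI[of _ "\<lambda>_. {}"]) (use empty.prems in simp)
next
  case (insert m M)
  have pr: "\<forall>k\<in>K0. \<forall>m'\<in>M. D k \<noteq> D m'" using insert.prems(2) by simp
  from insert.IH[OF insert.prems(1) pr] obtain K1 G1 where K1: "K1 \<subseteq> K0" "infinite K1"
    "\<forall>m\<in>M. G1 m \<in> Lev n \<and> (\<forall>k\<in>K1. G1 m \<subseteq> D k \<inter> D m) \<and>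
       (\<forall>\<epsilon>>0. finite {k\<in>K1. measure Q (G1 m) + \<epsilon> \<le> measure Q (D k \<inter> D m)})"
    by blast
  have "\<And>k. k \<in> K1 \<Longrightarrow> D k \<inter> D m \<in> Lev n"
  proof -
    fix k assume "k \<in> K1"
    then have "k \<in> K0" using K1(1) by blast
    then have "D k \<noteq> D m" using insert.prems(2) by simp
    then show "D k \<inter> D m \<in> Lev n" by (rule pair)
  qed
  from one_m[of K1 "\<lambda>k. D k \<inter> D m", OF K1(2) this] obtain K2 G' where K2: "K2 \<subseteq> K1" "infinite K2" "G' \<in> Lev n"
    "\<forall>k\<in>K2. G' \<subseteq> D k \<inter> D m" "\<forall>\<epsilon>>0. finite {k\<in>K2. measure Q G' + \<epsilon> \<le> measure Q (D k \<inter> D m)}"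
    by blast
  define G where "G = G1(m := G')"
  have "\<forall>m'\<in>insert m M. G m' \<in> Lev n \<and> (\<forall>k\<in>K2. G m' \<subseteq> D k \<inter> D m') \<and>
       (\<forall>\<epsilon>>0. finite {k\<in>K2. measure Q (G m') + \<epsilon> \<le> measure Q (D k \<inter> D m')})"
  proof
    fix m' assume m': "m' \<in> insert m M"
    show "G m' \<in> Lev n \<and> (\<forall>k\<in>K2. G m' \<subseteq> D k \<inter> D m') \<and>
       (\<forall>\<epsilon>>0. finite {k\<in>K2. measure Q (G m') + \<epsilon> \<le> measure Q (D k \<inter> D m')})"
    proof (cases "m' = m")
      case True
      then have "G m' = G'" unfolding G_def by simp
      then show ?thesis unfolding \<open>m' = m\<close> using K2(3,4,5) by simp
    next
      case False
      then have mM: "m' \<in> M" using m' by simp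
      have "finite {k\<in>K2. measure Q (G1 m') + \<epsilon> \<le> measure Q (D k \<inter> D m')}" if "\<epsilon> > 0" for \<epsilon>
      proof (rule finite_subset[of _ "{k\<in>K1. measure Q (G1 m') + \<epsilon> \<le> measure Q (D k \<inter> D m')}"])
        show "{k \<in> K2. measure Q (G1 m') + \<epsilon> \<le> measure Q (D k \<inter> D m')}
            \<subseteq> {k \<in> K1. measure Q (G1 m') + \<epsilon> \<le> measure Q (D k \<inter> D m')}" using K2(1) by blast
        show "finite {k \<in> K1. measure Q (G1 m') + \<epsilon> \<le> measure Q (D k \<inter> D m')}"
          using K1(3) mM that by blast
      qed
      moreover have "G m' = G1 m'" using False unfolding G_def by simp
      moreover have "\<forall>k\<in>K2. G1 m' \<subseteq> D k \<inter> D m'" using K1(3) K2(1) mM by blast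
      moreover have "G1 m' \<in> Lev n" using K1(3) mM by blast
      ultimately show ?thesis by simp
    qed
  qed
  moreover have "K2 \<subseteq> K0" using K2(1) K1(1) by (rule order_trans)
  ultimately show ?case using K2(2) by blast
qed

lemma U:
  assumes sL: "s < L" and M: "finite M"
  shows "finite {k. s + (L - s) / 3 < measure Q (D k \<inter> (\<Union>m\<in>M. D m))}"
proof (rule ccontr)
  define \<delta> where "\<delta> = (L - s) / 3"
  have dpos: "\<delta> > 0" using sL unfolding \<delta>_def by simp
  define K0 where "K0 = {k. s + \<delta> < measure Q (D k \<inter> (\<Union>m\<in>M. D m))}"
  assume "infinite {k. s + (L - s) / 3 < measure Q (D k \<inter> (\<Union>m\<in>M. D m))}"
  then have K0inf: "infinite K0" unfolding K0_def \<delta>_def .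
  have "finite (\<Union>m\<in>M. {k. D k = D m})" using M D_fin by blast
  moreover have "{k. D k \<in> D ` M} = (\<Union>m\<in>M. {k. D k = D m})" by auto
  ultimately have "finite {k. D k \<in> D ` M}" by simp
  define K1 where "K1 = K0 - {k. D k \<in> D ` M}"
  have K1inf: "infinite K1" unfolding K1_def
    by (rule Diff_infinite_finite[OF \<open>finite {k. D k \<in> D ` M}\<close> K0inf])
  have K1ne: "\<forall>k\<in>K1. \<forall>m\<in>M. D k \<noteq> D m" unfolding K1_def by auto
  obtain K G where KG: "K \<subseteq> K1" "infinite K"
    "\<forall>m\<in>M. G m \<in> Lev n \<and> (\<forall>k\<in>K. G m \<subseteq> D k \<inter> D m) \<and>
       (\<forall>\<epsilon>>0. finite {k\<in>K. measure Q (G m) + \<epsilon> \<le> measure Q (D k \<inter> D m)})"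
    using extr_lem[OF M K1inf K1ne] by blast
  define \<epsilon> where "\<epsilon> = \<delta> / (real (card M) + 1)"
  have epos: "\<epsilon> > 0" unfolding \<epsilon>_def using dpos by simp
  define bad where "bad = (\<Union>m\<in>M. {k\<in>K. measure Q (G m) + \<epsilon> \<le> measure Q (D k \<inter> D m)})"
  have "finite bad" unfolding bad_def using M KG(3) epos by blast
  then have "infinite (K - bad)" by (rule Diff_infinite_finite[OF _ KG(2)])
  then obtain k where k: "k \<in> K" "k \<notin> bad" by (metis Diff_iff finite.emptyI ex_in_conv)
  have Gsets: "G m \<in> sets Q" if "m \<in> M" for m using KG(3) that lev_sets by blast
  have Dsets: "D i \<in> sets Q" for i using D_lev lev_sets by blast
  have GU: "(\<Union>m\<in>M. G m) \<subseteq> (\<Inter>k\<in>K. D k)" using KG(3) by blast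
  have "measure Q (\<Union>m\<in>M. G m) \<le> measure Q (\<Inter>k\<in>K. D k)"
    by (rule finite_measure_mono[OF GU]) (use inter_inf[OF KG(2)] lev_sets in blast)
  also have "\<dots> \<le> s" by (rule le_s[OF KG(2)])
  finally have G_le: "measure Q (\<Union>m\<in>M. G m) \<le> s" .
  have each: "measure Q (D k \<inter> D m - G m) < \<epsilon>" if m: "m \<in> M" for m
  proof -
    have "measure Q (D k \<inter> D m - G m) = measure Q (D k \<inter> D m) - measure Q (G m)"
      by (rule finite_measure_Diff) (use Dsets Gsets m KG(3) k(1) in auto)
    moreover have "\<not> measure Q (G m) + \<epsilon> \<le> measure Q (D k \<inter> D m)"
      using k m unfolding bad_def by blast
    ultimately show ?thesis by simp
  qed
  have sum_le: "measure Q (\<Union>m\<in>M. D k \<inter> D m - G m) \<le> (\<Sum>m\<in>M. measure Q (D k \<inter> D m - G m))"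
    by (rule finite_measure_subadditive_finite[OF M]) (use Dsets Gsets in auto)
  have "(\<Sum>m\<in>M. measure Q (D k \<inter> D m - G m)) \<le> (\<Sum>m\<in>M. \<epsilon>)"
    by (rule sum_mono) (use each in \<open>auto intro: less_imp_le\<close>)
  also have "\<dots> = real (card M) * \<epsilon>" by simp
  also have "\<dots> < \<delta>"
  proof -
    have "real (card M) * \<epsilon> = \<delta> * (real (card M) / (real (card M) + 1))"
      unfolding \<epsilon>_def by simp
    also have "\<dots> < \<delta> * 1" by (rule mult_strict_left_mono) (use dpos in auto)
    finally show ?thesis by simp
  qed
  finally have R_lt: "measure Q (\<Union>m\<in>M. D k \<inter> D m - G m) < \<delta>" using sum_le by linarith
  have sub: "D k \<inter> (\<Union>m\<in>M. D m) \<subseteq> (\<Union>m\<in>M. G m) \<union> (\<Union>m\<in>M. D k \<inter> D m - G m)" by blast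
  have USets: "(\<Union>m\<in>M. G m) \<in> sets Q" "(\<Union>m\<in>M. D k \<inter> D m - G m) \<in> sets Q"
    using M Gsets Dsets by auto
  have "measure Q (D k \<inter> (\<Union>m\<in>M. D m)) \<le> measure Q ((\<Union>m\<in>M. G m) \<union> (\<Union>m\<in>M. D k \<inter> D m - G m))"
    by (rule finite_measure_mono[OF sub]) (use USets in auto)
  also have "\<dots> \<le> measure Q (\<Union>m\<in>M. G m) + measure Q (\<Union>m\<in>M. D k \<inter> D m - G m)"
    by (rule measure_subadditive) (use USets emeasure_finite in auto)
  finally have "measure Q (D k \<inter> (\<Union>m\<in>M. D m)) < s + \<delta>" using G_le R_lt by linarith
  moreover have "k \<in> K0" using k(1) KG(1) unfolding K1_def by blast
  ultimately show False unfolding K0_def by simp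
qed

lemma growth:
  assumes sL: "s < L"
  shows "\<exists>M. finite M \<and> real N * ((L - s) / 3) \<le> measure Q (\<Union>m\<in>M. D m)"
proof (induction N)
  case 0
  show ?case by (rule exI[of _ "{}"]) simp
next
  case (Suc N)
  define \<delta> where "\<delta> = (L - s) / 3"
  have dpos: "\<delta> > 0" using sL unfolding \<delta>_def by simp
  from Suc obtain M where M: "finite M" "real N * \<delta> \<le> measure Q (\<Union>m\<in>M. D m)"
    unfolding \<delta>_def by blast
  have "L - \<delta> < L" using dpos by simp
  from order_tendstoD(1)[OF D_lim this] obtain N0 where N0: "\<And>k. k \<ge> N0 \<Longrightarrow> L - \<delta> < measure Q (D k)"
    unfolding eventually_sequentially by blast
  have "finite {k. s + \<delta> < measure Q (D k \<inter> (\<Union>m\<in>M. D m))}"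
    using U[OF sL M(1)] unfolding \<delta>_def .
  then obtain B where B: "\<And>k. k \<in> {k. s + \<delta> < measure Q (D k \<inter> (\<Union>m\<in>M. D m))} \<Longrightarrow> k < B"
    by (metis finite_nat_set_iff_bounded)
  define k where "k = max N0 B"
  have k1: "L - \<delta> < measure Q (D k)" using N0 unfolding k_def by simp
  have k2: "measure Q (D k \<inter> (\<Union>m\<in>M. D m)) \<le> s + \<delta>"
    using B[of k] unfolding k_def by force
  have Dsets: "D i \<in> sets Q" for i using D_lev lev_sets by blast
  have Us: "(\<Union>m\<in>M. D m) \<in> sets Q" using M(1) Dsets by auto
  have "measure Q ((\<Union>m\<in>M. D m) \<union> D k) = measure Q (\<Union>m\<in>M. D m) + measure Q (D k - (\<Union>m\<in>M. D m))"
    by (rule finite_measure_Union') (use Us Dsets in auto)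
  moreover have "measure Q (D k - (\<Union>m\<in>M. D m)) = measure Q (D k) - measure Q (D k \<inter> (\<Union>m\<in>M. D m))"
    by (rule finite_measure_Diff') (use Us Dsets in auto)
  moreover have "(\<Union>m\<in>insert k M. D m) = (\<Union>m\<in>M. D m) \<union> D k" by auto
  ultimately have eq: "measure Q (\<Union>m\<in>insert k M. D m) = measure Q (\<Union>m\<in>M. D m) + measure Q (D k) - measure Q (D k \<inter> (\<Union>m\<in>M. D m))"
    by simp
  have L3: "L = s + 3 * \<delta>" unfolding \<delta>_def by (simp add: field_simps)
  have "real (Suc N) * \<delta> = real N * \<delta> + \<delta>" by (simp add: algebra_simps)
  then have "real (Suc N) * \<delta> \<le> measure Q (\<Union>m\<in>insert k M. D m)"
    using eq M(2) k1 k2 L3 by linarith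
  then show ?case using M(1) unfolding \<delta>_def by (intro exI[of _ "insert k M"]) simp
qed

lemma s_ge_L: "L \<le> s"
proof (rule ccontr)
  assume "\<not> L \<le> s"
  then have sL: "s < L" by simp
  define \<delta> where "\<delta> = (L - s) / 3"
  have dpos: "\<delta> > 0" using sL unfolding \<delta>_def by simp
  obtain N :: nat where N: "1 / \<delta> < real N" using reals_Archimedean2 by blast
  then have "1 < real N * \<delta>" using dpos by (simp add: field_simps)
  moreover obtain M where "finite M" "real N * \<delta> \<le> measure Q (\<Union>m\<in>M. D m)"
    using growth[OF sL, of N] unfolding \<delta>_def by blast
  moreover have "measure Q (\<Union>m\<in>M. D m) \<le> 1" by simp
  ultimately show False by linarith
qed

lemma core_main: "\<exists>K. infinite K \<and> L \<le> measure Q (\<Inter>k\<in>K. D k)"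
  using attain s_ge_L by (meson order_trans)

end

context lev_sys
begin

lemma P:
  "(\<And>k. D k \<in> Lev n) \<Longrightarrow> (\<lambda>k. measure Q (D k)) \<longlonglongrightarrow> L \<Longrightarrow>
   \<exists>K. infinite K \<and> L \<le> measure Q (\<Inter>k\<in>K. D k)"
proof (induction n arbitrary: D L)
  case 0
  have c: "D k = D 0" for k using lev_base 0(1) by blast
  define A where "A = D 0"
  have Dc: "D = (\<lambda>_. A)" unfolding A_def by (rule ext) (rule c)
  have "(\<lambda>k. measure Q A) \<longlonglongrightarrow> L" using 0(2) unfolding Dc .
  then have "L = measure Q A" by (simp add: LIMSEQ_const_iff)
  then show ?case unfolding Dc by (intro exI[of _ UNIV]) simp
next
  case (Suc n)
  show ?case
  proof (cases "infinite {k. D k \<in> Lev n}")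
    case True
    define r where "r = enumerate {k. D k \<in> Lev n}"
    have sm: "strict_mono r" unfolding r_def by (rule strict_mono_enumerate[OF True])
    have rin: "D (r i) \<in> Lev n" for i unfolding r_def using enumerate_in_set[OF True] by simp
    have lim: "(\<lambda>i. measure Q (D (r i))) \<longlonglongrightarrow> L"
      using LIMSEQ_subseq_LIMSEQ[OF Suc(3) sm] unfolding o_def .
    from Suc.IH[of "\<lambda>i. D (r i)", OF rin lim] obtain K' where
      "infinite K'" "L \<le> measure Q (\<Inter>i\<in>K'. D (r i))" by blast
    then show ?thesis using reduce[OF strict_mono_imp_inj_on[OF sm]] by blast
  next
    case False
    show ?thesis
    proof (cases "\<exists>A. infinite {k. D k = A}")
      case True
      then obtain A where A: "infinite {k. D k = A}" by blast
      have "(\<lambda>i. measure Q (D i)) \<longlonglongrightarrow> L" by (rule Suc(3))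
      have "L \<le> measure Q A"
        by (rule limit_along2[OF Suc(3) A]) simp
      moreover have "(\<Inter>k\<in>{k. D k = A}. D k) = A" using A by (auto simp: infinite_imp_nonempty)
      ultimately show ?thesis using A by (intro exI[of _ "{k. D k = A}"]) simp
    next
      case False2: False
      obtain N where N: "\<And>k. k \<in> {k. D k \<in> Lev n} \<Longrightarrow> k < N"
        using False by (metis finite_nat_set_iff_bounded)
      define D' where "D' k = D (k + N)" for k
      interpret c: core Q Lev n D' L
      proof unfold_locales
        show "\<exists>K. infinite K \<and> l \<le> measure Q (\<Inter>k\<in>K. E k)"
          if "\<And>k. E k \<in> Lev n" "(\<lambda>k. measure Q (E k)) \<longlonglongrightarrow> l" for E l
          using Suc.IH that by blast
        show "D' k \<in> Lev (Suc n)" for k unfolding D'_def using Suc(2) by blast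
        show "D' k \<notin> Lev n" for k unfolding D'_def using N[of "k + N"] by auto
        show "finite {k. D' k = A}" for A
        proof -
          have "finite {k. D k = A}" using False2 by blast
          then have "finite ((\<lambda>k. k + N) -` {k. D k = A})" by (rule finite_vimageI) (simp add: inj_on_def)
          moreover have "{k. D' k = A} = (\<lambda>k. k + N) -` {k. D k = A}" unfolding D'_def by auto
          ultimately show ?thesis by simp
        qed
        show "(\<lambda>k. measure Q (D' k)) \<longlonglongrightarrow> L"
          unfolding D'_def by (rule LIMSEQ_ignore_initial_segment[OF Suc(3)])
      qed
      from c.core_main obtain K' where "infinite K'" "L \<le> measure Q (\<Inter>i\<in>K'. D (i + N))"
        unfolding D'_def by blast
      then show ?thesis using reduce[of "\<lambda>i. i + N"] by (simp add: inj_on_def)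
    qed
  qed
qed

theorem abs_main:
  assumes inj: "inj C" and C: "\<And>i. C i \<in> Lev (Suc n)" "\<And>i. C i \<notin> Lev n"
    and lim: "(\<lambda>i. measure Q (C i)) \<longlonglongrightarrow> L"
  shows "\<exists>F. F \<in> Lev n \<and> L = measure Q F \<and> infinite {i. F \<subseteq> C i}"
proof -
  obtain K where K: "infinite K" "L \<le> measure Q (\<Inter>k\<in>K. C k)"
    using P[of C "Suc n" L] C(1) lim by blast
  define F where "F = (\<Inter>k\<in>K. C k)"
  obtain a where a: "a \<in> K" using K(1) by (metis finite.emptyI ex_in_conv)
  have "infinite (K - {a})" using K(1) by simp
  then obtain b where b: "b \<in> K" "b \<noteq> a" by (metis Diff_iff finite.emptyI ex_in_conv singletonI)
  have Cab: "C a \<noteq> C b" using inj b(2) by (metis injD)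
  have FL1: "F \<in> Lev (Suc n)" unfolding F_def by (rule lev_inter) (use a C in auto)
  have FL: "F \<in> Lev n"
    by (rule two[OF FL1, of "C a" "C b"]) (use a b Cab C in \<open>auto simp: F_def\<close>)
  have sub: "K \<subseteq> {i. F \<subseteq> C i}" unfolding F_def by auto
  have "measure Q F \<le> L"
  proof (rule limit_along[OF lim K(1)])
    fix k assume "k \<in> K"
    then show "measure Q F \<le> measure Q (C k)"
      by (intro finite_measure_mono) (use C(1) lev_sets in \<open>auto simp: F_def\<close>)
  qed
  moreover have "infinite {i. F \<subseteq> C i}" using sub K(1) infinite_super by blast
  ultimately show ?thesis using FL K(2) unfolding F_def
    by (intro exI[of _ "\<Inter>k\<in>K. C k"]) auto
qed

theorem abs_mono:
  fixes C :: "nat \<Rightarrow> 'a set"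
  assumes inj: "inj C" and C: "\<And>i. C i \<in> Lev (Suc n)" "\<And>i. C i \<notin> Lev n"
  shows "\<not> strict_mono (\<lambda>i. measure Q (C i))"
proof
  assume sm: "strict_mono (\<lambda>i. measure Q (C i))"
  have bdd: "bdd_above (range (\<lambda>i. measure Q (C i)))" by (rule bdd_aboveI[of _ 1]) auto
  have inc: "incseq (\<lambda>i. measure Q (C i))" using sm by (simp add: strict_mono_mono)
  have lim: "(\<lambda>i. measure Q (C i)) \<longlonglongrightarrow> (SUP i. measure Q (C i))"
    by (rule LIMSEQ_incseq_SUP[OF bdd inc])
  from abs_main[OF inj C lim] obtain F where F: "F \<in> Lev n"
    "(SUP i. measure Q (C i)) = measure Q F" "infinite {i. F \<subseteq> C i}" by blast
  obtain i where i: "F \<subseteq> C i" using F(3) by (metis Collect_empty_eq finite.emptyI)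
  have "measure Q F \<le> measure Q (C i)"
    by (rule finite_measure_mono[OF i]) (use C(1) lev_sets in auto)
  also have "\<dots> < measure Q (C (Suc i))" using sm by (simp add: strict_mono_def)
  also have "\<dots> \<le> (SUP i. measure Q (C i))" by (rule cSUP_upper[OF _ bdd]) simp
  finally show False using F(2) by simp
qed

end



lemma fd_subspace: "fd_subspace_dim T k \<Longrightarrow> subspace T"
  unfolding fd_subspace_dim_def by auto

lemma fd_sub:
  assumes S: "subspace S" and ST: "S \<subseteq> T" and T: "fd_subspace_dim T k"
  shows "\<exists>k'\<le>k. fd_subspace_dim S k'"
proof -
  obtain B where B: "finite B" "independent B" "span B = T" "card B = k"
    using T unfolding fd_subspace_dim_def by blast
  obtain B' where B': "B' \<subseteq> S" "independent B'" "S \<subseteq> span B'" "card B' = dim S"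
    by (rule basis_exists)
  have "B' \<subseteq> span B" using B'(1) ST unfolding B(3) by (rule order_trans)
  from independent_span_bound[OF B(1) B'(2) this] have fc: "finite B'" "card B' \<le> k" unfolding B(4) by auto
  have "span B' = S" by (rule span_subspace[OF B'(1) B'(3) S])
  then have "fd_subspace_dim S (card B')" unfolding fd_subspace_dim_def using fc(1) B'(2) by (intro exI[of _ B']) simp
  then show ?thesis using fc(2) by (intro exI[of _ "card B'"]) simp
qed

lemma fd_eq:
  assumes S: "fd_subspace_dim S k" and T: "fd_subspace_dim T k" and ST: "S \<subseteq> T"
  shows "S = T"
proof (rule ccontr)
  assume ne: "S \<noteq> T"
  obtain B where B: "finite B" "independent B" "span B = T" "card B = k"
    using T unfolding fd_subspace_dim_def by blast
  obtain B' where B': "finite B'" "independent B'" "span B' = S" "card B' = k"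
    using S unfolding fd_subspace_dim_def by blast
  have "\<not> B \<subseteq> S"
  proof
    assume "B \<subseteq> S"
    then have "span B \<subseteq> S" using fd_subspace[OF S] by (rule span_minimal)
    then have "T \<subseteq> S" using B(3) by simp
    then show False using ST ne by blast
  qed
  then obtain y where y0: "y \<in> B" "y \<notin> S" by blast
  then have y: "y \<in> B" "y \<notin> span B'" unfolding B'(3) by auto
  have ind: "independent (insert y B')" by (rule independent_insertI[OF y(2) B'(2)])
  have "B' \<subseteq> span B'" by (rule span_superset)
  then have "B' \<subseteq> span B" unfolding B'(3) B(3) using ST by (rule order_trans)
  moreover have "y \<in> span B" using y(1) by (rule span_base)
  ultimately have "insert y B' \<subseteq> span B" by simp
  from independent_span_bound[OF B(1) ind this] have "card (insert y B') \<le> k" using B(4) by simp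
  moreover have "card (insert y B') = k + 1"
  proof -
    have "y \<notin> B'"
    proof
      assume "y \<in> B'"
      then have "y \<in> span B'" by (rule span_base)
      then show False using y(2) by contradiction
    qed
    then show ?thesis using B'(1,4) by simp
  qed
  ultimately show False by simp
qed

lemma fd_unique:
  assumes "fd_subspace_dim T k" "fd_subspace_dim T k'" shows "k = k'"
proof -
  obtain B where B: "finite B" "independent B" "span B = T" "card B = k"
    using assms(1) unfolding fd_subspace_dim_def by blast
  obtain B' where B': "finite B'" "independent B'" "span B' = T" "card B' = k'"
    using assms(2) unfolding fd_subspace_dim_def by blast
  have "B' \<subseteq> span B" using B'(3) B(3) span_superset[of B'] by simp
  then have "card B' \<le> card B" using independent_span_bound[OF B(1) B'(2)] by simp
  moreover have "B \<subseteq> span B'" using B'(3) B(3) span_superset[of B] by simp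
  then have "card B \<le> card B'" using independent_span_bound[OF B'(1) B(2)] by simp
  ultimately show ?thesis using B(4) B'(4) by simp
qed

lemma fd_zero: "fd_subspace_dim T 0 \<longleftrightarrow> T = {0}"
proof
  assume "fd_subspace_dim T 0"
  then obtain B where "finite B" "span B = T" "card B = 0" unfolding fd_subspace_dim_def by blast
  then show "T = {0}" by simp
next
  assume "T = {0}"
  then show "fd_subspace_dim T 0" unfolding fd_subspace_dim_def
    by (intro exI[of _ "{}"]) (simp add: independent_empty)
qed

definition tr :: "'a::real_vector \<Rightarrow> 'a set \<Rightarrow> 'a set" where
  "tr p H = (\<lambda>y. y - p) ` H"

lemma hyp_img: "{x + u | u. u \<in> T} = (\<lambda>u. x + u) ` T" by auto

lemma hyp_at:
  assumes "hyperplane_dim H k" "p \<in> H"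
  shows "fd_subspace_dim (tr p H) k" "H = (\<lambda>u. p + u) ` tr p H"
proof -
  obtain x T where xT: "fd_subspace_dim T k" "H = (\<lambda>u. x + u) ` T"
    using assms(1) unfolding hyperplane_dim_def hyp_img by blast
  have sT: "subspace T" using fd_subspace[OF xT(1)] .
  obtain u0 where u0: "u0 \<in> T" "p = x + u0" using assms(2) xT(2) by blast
  have "tr p H = T"
  proof
    show "tr p H \<subseteq> T"
    proof
      fix w assume "w \<in> tr p H"
      then obtain y where y: "y \<in> H" "w = y - p" unfolding tr_def by blast
      then obtain u where u: "u \<in> T" "y = x + u" using xT(2) by blast
      have "w = u - u0" using y(2) u(2) u0(2) by simp
      then show "w \<in> T" using subspace_diff[OF sT u(1) u0(1)] by simp
    qed
    show "T \<subseteq> tr p H"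
    proof
      fix v assume v: "v \<in> T"
      have "v + u0 \<in> T" using sT v u0(1) by (rule subspace_add)
      moreover have "v = (x + (v + u0)) - p" using u0(2) by simp
      moreover have "x + (v + u0) \<in> H" using xT(2) \<open>v + u0 \<in> T\<close> by blast
      ultimately show "v \<in> tr p H" unfolding tr_def by (metis image_eqI)
    qed
  qed
  then show "fd_subspace_dim (tr p H) k" using xT(1) by simp
  show "H = (\<lambda>u. p + u) ` tr p H" unfolding tr_def image_image by simp
qed

lemma hyp_of: "fd_subspace_dim T k \<Longrightarrow> hyperplane_dim ((\<lambda>u. p + u) ` T) k"
  unfolding hyperplane_dim_def hyp_img by blast

lemma hyp_ne: "hyperplane_dim H k \<Longrightarrow> H \<noteq> {}"
proof -
  assume "hyperplane_dim H k"
  then obtain x T where xT: "fd_subspace_dim T k" "H = (\<lambda>u. x + u) ` T"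
    unfolding hyperplane_dim_def hyp_img by blast
  have "0 \<in> T" using fd_subspace[OF xT(1)] by (rule subspace_0)
  then show "H \<noteq> {}" using xT(2) by blast
qed

lemma hyp_unique: "hyperplane_dim H k \<Longrightarrow> hyperplane_dim H k' \<Longrightarrow> k = k'"
proof -
  assume a: "hyperplane_dim H k" "hyperplane_dim H k'"
  obtain p where "p \<in> H" using hyp_ne[OF a(1)] by blast
  then show "k = k'" using fd_unique[OF hyp_at(1)[OF a(1)] hyp_at(1)[OF a(2)]] by simp
qed



definition Levh :: "nat \<Rightarrow> 'a::real_vector set set" where
  "Levh n = {H. H = {} \<or> (\<exists>k<n. hyperplane_dim H k)}"

definition Levs :: "nat \<Rightarrow> 'a::real_vector set set" where
  "Levs n = {T. \<exists>k\<le>n. fd_subspace_dim T k}"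

lemma tr_mem: "x \<in> tr p H \<longleftrightarrow> x + p \<in> H"
  unfolding tr_def by (auto simp: image_iff) (metis add_diff_cancel)

lemma fd_hyp: "fd_subspace_dim T k \<Longrightarrow> hyperplane_dim T k"
  using hyp_of[of T k 0] by simp

lemma Levs_inter:
  assumes F: "F \<noteq> {}" "F \<subseteq> Levs n" shows "\<Inter>F \<in> Levs n"
proof -
  obtain T0 where T0: "T0 \<in> F" using F(1) by blast
  then obtain k0 where k0: "k0 \<le> n" "fd_subspace_dim T0 k0" using F(2) unfolding Levs_def by blast
  have "\<forall>s\<in>F. subspace s"
  proof
    fix s assume "s \<in> F"
    then obtain k where "fd_subspace_dim s k" using F(2) unfolding Levs_def by blast
    then show "subspace s" by (rule fd_subspace)
  qed
  then have "subspace (\<Inter>F)" by (rule subspace_Inter)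
  moreover have "\<Inter>F \<subseteq> T0" using T0 by blast
  ultimately obtain k' where "k' \<le> k0" "fd_subspace_dim (\<Inter>F) k'" using fd_sub k0(2) by blast
  then show ?thesis using k0(1) unfolding Levs_def by (intro CollectI exI[of _ k']) simp
qed

lemma Levs_sub:
  assumes X: "X \<in> Levs (Suc n)" and A: "A \<in> Levs (Suc n)" "A \<notin> Levs n" and XA: "X \<subseteq> A" "X \<noteq> A"
  shows "X \<in> Levs n"
proof -
  obtain ka where ka: "ka \<le> Suc n" "fd_subspace_dim A ka" using A(1) unfolding Levs_def by blast
  have "\<not> ka \<le> n" using A(2) ka(2) unfolding Levs_def by blast
  then have kaeq: "ka = Suc n" using ka(1) by simp
  obtain kx where kx: "kx \<le> Suc n" "fd_subspace_dim X kx" using X unfolding Levs_def by blast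
  show ?thesis
  proof (cases "kx \<le> n")
    case True
    then show ?thesis using kx(2) unfolding Levs_def by blast
  next
    case False
    then have "kx = ka" using kx(1) kaeq by simp
    then have "X = A" using fd_eq[OF kx(2) _ XA(1)] ka(2) by simp
    then show ?thesis using XA(2) by contradiction
  qed
qed

lemma Levh_inter:
  assumes F: "F \<noteq> {}" "F \<subseteq> Levh n" shows "\<Inter>F \<in> Levh n"
proof (cases "\<Inter>F = {}")
  case True
  then show ?thesis unfolding Levh_def by simp
next
  case False
  then obtain p where p: "p \<in> \<Inter>F" by blast
  have hF: "\<exists>k<n. hyperplane_dim H k" if "H \<in> F" for H
    using F(2) that p unfolding Levh_def by blast
  define S where "S = \<Inter>(tr p ` F)"
  have "\<forall>s\<in>tr p ` F. subspace s"
  proof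
    fix s assume "s \<in> tr p ` F"
    then obtain H where H: "H \<in> F" "s = tr p H" by blast
    then obtain k where "hyperplane_dim H k" using hF by blast
    then have "fd_subspace_dim (tr p H) k" using hyp_at(1) p H(1) by blast
    then show "subspace s" using H(2) fd_subspace by blast
  qed
  then have sS: "subspace S" unfolding S_def by (rule subspace_Inter)
  obtain H0 where H0: "H0 \<in> F" using F(1) by blast
  then obtain k0 where k0: "k0 < n" "hyperplane_dim H0 k0" using hF by blast
  have fd0: "fd_subspace_dim (tr p H0) k0" using hyp_at(1)[OF k0(2)] p H0 by blast
  have "S \<subseteq> tr p H0" unfolding S_def using H0 by blast
  then obtain k' where k': "k' \<le> k0" "fd_subspace_dim S k'" using fd_sub[OF sS _ fd0] by blast
  have eq: "\<Inter>F = (\<lambda>u. p + u) ` S"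
  proof
    show "\<Inter>F \<subseteq> (\<lambda>u. p + u) ` S"
    proof
      fix y assume y: "y \<in> \<Inter>F"
      have "y - p \<in> S" unfolding S_def using y by (auto simp: tr_mem)
      moreover have "y = p + (y - p)" by simp
      ultimately show "y \<in> (\<lambda>u. p + u) ` S" by (rule rev_image_eqI)
    qed
    show "(\<lambda>u. p + u) ` S \<subseteq> \<Inter>F"
    proof
      fix y assume "y \<in> (\<lambda>u. p + u) ` S"
      then obtain u where u: "u \<in> S" "y = p + u" by blast
      have "u + p \<in> H" if "H \<in> F" for H using u(1) that unfolding S_def by (auto simp: tr_mem)
      then show "y \<in> \<Inter>F" using u(2) by (simp add: add.commute)
    qed
  qed
  have "hyperplane_dim (\<Inter>F) k'" unfolding eq by (rule hyp_of[OF k'(2)])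
  then show ?thesis unfolding Levh_def using k' k0(1) by (intro CollectI disjI2 exI[of _ k']) simp
qed

lemma Levh_sub:
  assumes X: "X \<in> Levh (Suc n)" and A: "A \<in> Levh (Suc n)" "A \<notin> Levh n" and XA: "X \<subseteq> A" "X \<noteq> A"
  shows "X \<in> Levh n"
proof (cases "X = {}")
  case True
  then show ?thesis unfolding Levh_def by simp
next
  case False
  have Ane: "A \<noteq> {}" using A(2) unfolding Levh_def by blast
  then obtain ka where ka: "ka < Suc n" "hyperplane_dim A ka" using A(1) unfolding Levh_def by blast
  have "\<not> ka < n" using A(2) ka(2) unfolding Levh_def by blast
  then have kaeq: "ka = n" using ka(1) by simp
  obtain kx where kx: "kx < Suc n" "hyperplane_dim X kx" using X False unfolding Levh_def by blast
  show ?thesis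
  proof (cases "kx < n")
    case True
    then show ?thesis using kx(2) unfolding Levh_def by blast
  next
    case nlt: False
    then have kxeq: "kx = n" using kx(1) by simp
    obtain p where p: "p \<in> X" using False by blast
    then have pA: "p \<in> A" using XA(1) by blast
    have f1: "fd_subspace_dim (tr p X) n" using hyp_at(1)[OF kx(2) p] kxeq by simp
    have f2: "fd_subspace_dim (tr p A) n" using hyp_at(1)[OF ka(2) pA] kaeq by simp
    have "tr p X \<subseteq> tr p A" unfolding tr_def using XA(1) by (rule image_mono)
    then have "tr p X = tr p A" by (rule fd_eq[OF f1 f2])
    then have "X = A" using hyp_at(2)[OF kx(2) p] hyp_at(2)[OF ka(2) pA] by simp
    then show ?thesis using XA(2) by contradiction
  qed
qed

lemma levh_sys:
  fixes Q :: "'a::real_vector measure"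
  assumes "prob_space Q" "\<And>H j. hyperplane_dim H j \<Longrightarrow> H \<in> sets Q"
  shows "lev_sys Q Levh"
  unfolding lev_sys_def lev_sys_axioms_def
proof (intro conjI allI impI assms(1))
  show "Levh n \<subseteq> Levh (Suc n)" for n unfolding Levh_def by auto
  show "A = B" if "A \<in> Levh 0" "B \<in> Levh 0" for A B :: "'a set" using that unfolding Levh_def by simp
  show "\<Inter>F \<in> Levh n" if "F \<noteq> {}" "F \<subseteq> Levh n" for F :: "'a set set" and n using Levh_inter that by blast
  show "X \<in> Levh n" if "X \<in> Levh (Suc n)" "A \<in> Levh (Suc n)" "A \<notin> Levh n" "X \<subseteq> A" "X \<noteq> A" for X A :: "'a set" and n
    using Levh_sub that by blast
  show "Levh n \<subseteq> sets Q" for n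
  proof
    fix H :: "'a set" assume "H \<in> Levh n"
    then show "H \<in> sets Q" unfolding Levh_def using assms(2) by auto
  qed
qed

lemma levs_sys:
  fixes Q :: "'a::real_vector measure"
  assumes "prob_space Q" "\<And>H j. hyperplane_dim H j \<Longrightarrow> H \<in> sets Q"
  shows "lev_sys Q Levs"
  unfolding lev_sys_def lev_sys_axioms_def
proof (intro conjI allI impI assms(1))
  show "Levs n \<subseteq> Levs (Suc n)" for n unfolding Levs_def by (auto intro: le_SucI)
  show "A = B" if "A \<in> Levs 0" "B \<in> Levs 0" for A B :: "'a set" using that unfolding Levs_def by (simp add: fd_zero)
  show "\<Inter>F \<in> Levs n" if "F \<noteq> {}" "F \<subseteq> Levs n" for F :: "'a set set" and n using Levs_inter that by blast
  show "X \<in> Levs n" if "X \<in> Levs (Suc n)" "A \<in> Levs (Suc n)" "A \<notin> Levs n" "X \<subseteq> A" "X \<noteq> A" for X A :: "'a set" and n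
    using Levs_sub that by blast
  show "Levs n \<subseteq> sets Q" for n
  proof
    fix H :: "'a set" assume "H \<in> Levs n"
    then show "H \<in> sets Q" unfolding Levs_def using assms(2) fd_hyp by blast
  qed
qed

theorem lemma9:
  fixes Q :: "'a::real_vector measure"
  assumes "prob_space Q"
    and "space Q = UNIV"
    and "\<And>H j. hyperplane_dim H j \<Longrightarrow> H \<in> sets Q"
  shows
    "(\<forall>(j::nat) (C::nat \<Rightarrow> 'a set) (L::real).
        inj C \<and> (\<forall>i. hyperplane_dim (C i) j) \<and> (\<lambda>i. measure Q (C i)) \<longlonglongrightarrow> L \<longrightarrow>
        (\<exists>F. (F = {} \<or> (\<exists>k<j. hyperplane_dim F k)) \<and> L = measure Q F \<and>
             infinite {i. F \<subseteq> C i}))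
   \<and> (\<forall>(j::nat) (C::nat \<Rightarrow> 'a set).
        inj C \<and> (\<forall>i. hyperplane_dim (C i) j) \<longrightarrow> \<not> strict_mono (\<lambda>i. measure Q (C i)))
   \<and> (\<forall>(j::nat) (C::nat \<Rightarrow> 'a set) (L::real).
        inj C \<and> (\<forall>i. fd_subspace_dim (C i) j) \<and> (\<lambda>i. measure Q (C i)) \<longlonglongrightarrow> L \<longrightarrow>
        (\<exists>F. (\<exists>k<j. fd_subspace_dim F k) \<and> L = measure Q F \<and>
             infinite {i. F \<subseteq> C i}))
   \<and> (\<forall>(j::nat) (C::nat \<Rightarrow> 'a set).
        inj C \<and> (\<forall>i. fd_subspace_dim (C i) j) \<longrightarrow> \<not> strict_mono (\<lambda>i. measure Q (C i)))"
proof -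
  have H: "lev_sys Q (Levh :: nat \<Rightarrow> 'a set set)" by (rule levh_sys[OF assms(1,3)])
  have S: "lev_sys Q (Levs :: nat \<Rightarrow> 'a set set)" by (rule levs_sys[OF assms(1,3)])
  have hin: "C i \<in> Levh (Suc j)" "C i \<notin> Levh j" if "\<forall>i. hyperplane_dim (C i) j" for C :: "nat \<Rightarrow> 'a set" and i j
  proof -
    have h: "hyperplane_dim (C i) j" using that by blast
    then show "C i \<in> Levh (Suc j)" unfolding Levh_def by blast
    have "C i \<noteq> {}" using hyp_ne[OF h] .
    moreover have "\<not> hyperplane_dim (C i) k" if "k < j" for k
    proof
      assume "hyperplane_dim (C i) k"
      then have "j = k" by (rule hyp_unique[OF h])
      then show False using that by simp
    qed
    ultimately show "C i \<notin> Levh j" unfolding Levh_def by blast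
  qed
  have sj0: False if "inj C" "\<forall>i. fd_subspace_dim (C i) 0" for C :: "nat \<Rightarrow> 'a set"
  proof -
    have "C 0 = C 1" using that(2) fd_zero by metis
    then show False using that(1) by (metis injD zero_neq_one)
  qed
  have sin: "C i \<in> Levs (Suc j)" "C i \<notin> Levs j" if "\<forall>i. fd_subspace_dim (C i) (Suc j)" for C :: "nat \<Rightarrow> 'a set" and i j
  proof -
    have h: "fd_subspace_dim (C i) (Suc j)" using that by blast
    then show "C i \<in> Levs (Suc j)" unfolding Levs_def by blast
    have "\<not> fd_subspace_dim (C i) k" if "k \<le> j" for k
    proof
      assume "fd_subspace_dim (C i) k"
      then have "Suc j = k" by (rule fd_unique[OF h])
      then show False using that by simp
    qed
    then show "C i \<notin> Levs j" unfolding Levs_def by blast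
  qed
  show ?thesis
  proof (intro conjI allI impI)
    fix j and C :: "nat \<Rightarrow> 'a set" and L
    assume a: "inj C \<and> (\<forall>i. hyperplane_dim (C i) j) \<and> (\<lambda>i. measure Q (C i)) \<longlonglongrightarrow> L"
    have a1: "inj C" and a2: "\<forall>i. hyperplane_dim (C i) j" and a3: "(\<lambda>i. measure Q (C i)) \<longlonglongrightarrow> L"
      using a by auto
    obtain F where "F \<in> Levh j" "L = measure Q F" "infinite {i. F \<subseteq> C i}"
      using lev_sys.abs_main[OF H a1 hin(1)[OF a2] hin(2)[OF a2] a3] by blast
    then show "\<exists>F. (F = {} \<or> (\<exists>k<j. hyperplane_dim F k)) \<and> L = measure Q F \<and> infinite {i. F \<subseteq> C i}"
      unfolding Levh_def by (intro exI[of _ F]) simp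
  next
    fix j and C :: "nat \<Rightarrow> 'a set"
    assume a: "inj C \<and> (\<forall>i. hyperplane_dim (C i) j)"
    have a1: "inj C" and a2: "\<forall>i. hyperplane_dim (C i) j" using a by auto
    show "\<not> strict_mono (\<lambda>i. measure Q (C i))"
      by (rule lev_sys.abs_mono[OF H a1 hin(1)[OF a2] hin(2)[OF a2]])
  next
    fix j and C :: "nat \<Rightarrow> 'a set" and L
    assume a: "inj C \<and> (\<forall>i. fd_subspace_dim (C i) j) \<and> (\<lambda>i. measure Q (C i)) \<longlonglongrightarrow> L"
    show "\<exists>F. (\<exists>k<j. fd_subspace_dim F k) \<and> L = measure Q F \<and> infinite {i. F \<subseteq> C i}"
    proof (cases j)
      case 0
      then show ?thesis using sj0[of C] a by simp
    next
      case (Suc j')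
      have a1: "inj C" and a2: "\<forall>i. fd_subspace_dim (C i) (Suc j')" and a3: "(\<lambda>i. measure Q (C i)) \<longlonglongrightarrow> L"
        using a Suc by auto
      obtain F where "F \<in> Levs j'" "L = measure Q F" "infinite {i. F \<subseteq> C i}"
        using lev_sys.abs_main[OF S a1 sin(1)[OF a2] sin(2)[OF a2] a3] by blast
      moreover obtain k where "k \<le> j'" "fd_subspace_dim F k" using \<open>F \<in> Levs j'\<close> unfolding Levs_def by blast
      ultimately show ?thesis using Suc by (intro exI[of _ F] conjI exI[of _ k]) auto
    qed
  next
    fix j and C :: "nat \<Rightarrow> 'a set"
    assume a: "inj C \<and> (\<forall>i. fd_subspace_dim (C i) j)"
    show "\<not> strict_mono (\<lambda>i. measure Q (C i))"
    proof (cases j)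
      case 0
      then show ?thesis using sj0[of C] a by simp
    next
      case (Suc j')
      have a1: "inj C" and a2: "\<forall>i. fd_subspace_dim (C i) (Suc j')" using a Suc by auto
      show ?thesis by (rule lev_sys.abs_mono[OF S a1 sin(1)[OF a2] sin(2)[OF a2]])
    qed
  qed
qed

end
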